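(* Let $W$ be a Coxeter group and $u\le v$ in $W$. If $s \in D_L(v)\setminus D_L(u)$, then the left multiplication map $x\mapsto sx$ maps $[u,v]$ to itself and restricts to a graph automorphism of $\Gamma(u,v)$. Similarly, if $s\in D_R(v)\setminus D_R(u)$, then right multiplication $x\mapsto xs$ restricts to a graph automorphism of $\Gamma(u,v)$.
   Context: $(W,S)$ is a Coxeter system with reflections $T$ (conjugates of $S$), length $\ell$ and Bruhat order $\le$ (transitive closure of $x<xt$, $t\in T$, $\ell(xt)>\ell(x)$). $D_L(w)=\{s\in S:\ell(sw)<\ell(w)\}$ and $D_R(w)=\{s\in S:\ell(ws)<\ell(w)\}$. $\Gamma(u,v)$ is the simple undirected graph on $[u,v]=\{x:u\le x\le v\}$ with edges $\{x,y\}$ whenever $y=xt$ for some $t\in T$. *)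

theory Defs
  imports "HOL-Algebra.Group"
begin

definition word_prod :: "('a, 'b) monoid_scheme \<Rightarrow> 'a list \<Rightarrow> 'a" where
  "word_prod G ws = foldr (\<lambda>a b. a \<otimes>\<^bsub>G\<^esub> b) ws \<one>\<^bsub>G\<^esub>"

(* Coxeter matrix on S: m s s = 1, symmetric, m s t \<noteq> 1 for s \<noteq> t;
   the value 0 encodes m(s,t) = \<infinity> (no relation). *)
definition coxeter_matrix :: "'a set \<Rightarrow> ('a \<Rightarrow> 'a \<Rightarrow> nat) \<Rightarrow> bool" where
  "coxeter_matrix S m \<longleftrightarrow>
     (\<forall>s\<in>S. m s s = 1) \<and> (\<forall>s\<in>S. \<forall>t\<in>S. m s t = m t s) \<and>
     (\<forall>s\<in>S. \<forall>t\<in>S. s \<noteq> t \<longrightarrow> m s t \<noteq> 1)"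

definition rel_word :: "'a \<Rightarrow> 'a \<Rightarrow> nat \<Rightarrow> 'a list" where
  "rel_word s t k = concat (replicate k [s, t])"

inductive cox_equiv :: "'a set \<Rightarrow> ('a \<Rightarrow> 'a \<Rightarrow> nat) \<Rightarrow> 'a list \<Rightarrow> 'a list \<Rightarrow> bool"
  for S m where
  refl: "cox_equiv S m w w"
| sym: "cox_equiv S m w w' \<Longrightarrow> cox_equiv S m w' w"
| trans: "cox_equiv S m w1 w2 \<Longrightarrow> cox_equiv S m w2 w3 \<Longrightarrow> cox_equiv S m w1 w3"
| rel: "s \<in> S \<Longrightarrow> t \<in> S \<Longrightarrow> m s t > 0 \<Longrightarrow> set xs \<subseteq> S \<Longrightarrow> set ys \<subseteq> S \<Longrightarrow>
        cox_equiv S m (xs @ rel_word s t (m s t) @ ys) (xs @ ys)"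

(* (G,S) is a Coxeter system: G is a group generated by the set S of involutions
   and has the presentation < S | (st)^{m(s,t)} = 1 > for a Coxeter matrix m,
   i.e. a word over S evaluates to 1 iff it is equivalent to the empty word
   modulo the defining relations. *)
definition coxeter_system :: "('a, 'b) monoid_scheme \<Rightarrow> 'a set \<Rightarrow> bool" where
  "coxeter_system G S \<longleftrightarrow> group G \<and> S \<subseteq> carrier G \<and>
     (\<forall>g\<in>carrier G. \<exists>ws. set ws \<subseteq> S \<and> word_prod G ws = g) \<and>
     (\<exists>m. coxeter_matrix S m \<and>
        (\<forall>s\<in>S. \<forall>t\<in>S. m s t > 0 \<longrightarrow> (s \<otimes>\<^bsub>G\<^esub> t) [^]\<^bsub>G\<^esub> (m s t) = \<one>\<^bsub>G\<^esub>) \<and>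
        (\<forall>ws. set ws \<subseteq> S \<longrightarrow> word_prod G ws = \<one>\<^bsub>G\<^esub> \<longrightarrow> cox_equiv S m ws []))"

definition cox_length :: "('a, 'b) monoid_scheme \<Rightarrow> 'a set \<Rightarrow> 'a \<Rightarrow> nat" where
  "cox_length G S w = (LEAST n. \<exists>ws. length ws = n \<and> set ws \<subseteq> S \<and> word_prod G ws = w)"

definition reflections :: "('a, 'b) monoid_scheme \<Rightarrow> 'a set \<Rightarrow> 'a set" where
  "reflections G S = {g \<otimes>\<^bsub>G\<^esub> s \<otimes>\<^bsub>G\<^esub> inv\<^bsub>G\<^esub> g | g s. g \<in> carrier G \<and> s \<in> S}"

definition bruhat_step :: "('a, 'b) monoid_scheme \<Rightarrow> 'a set \<Rightarrow> 'a \<Rightarrow> 'a \<Rightarrow> bool" where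
  "bruhat_step G S x y \<longleftrightarrow> x \<in> carrier G \<and>
     (\<exists>t\<in>reflections G S. y = x \<otimes>\<^bsub>G\<^esub> t \<and> cox_length G S y > cox_length G S x)"

definition bruhat_le :: "('a, 'b) monoid_scheme \<Rightarrow> 'a set \<Rightarrow> 'a \<Rightarrow> 'a \<Rightarrow> bool" where
  "bruhat_le G S x y \<longleftrightarrow> x \<in> carrier G \<and> (bruhat_step G S)\<^sup>*\<^sup>* x y"

definition bruhat_interval :: "('a, 'b) monoid_scheme \<Rightarrow> 'a set \<Rightarrow> 'a \<Rightarrow> 'a \<Rightarrow> 'a set" where
  "bruhat_interval G S u v = {x. bruhat_le G S u x \<and> bruhat_le G S x v}"

definition left_descents :: "('a, 'b) monoid_scheme \<Rightarrow> 'a set \<Rightarrow> 'a \<Rightarrow> 'a set" where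
  "left_descents G S w = {s\<in>S. cox_length G S (s \<otimes>\<^bsub>G\<^esub> w) < cox_length G S w}"

definition right_descents :: "('a, 'b) monoid_scheme \<Rightarrow> 'a set \<Rightarrow> 'a \<Rightarrow> 'a set" where
  "right_descents G S w = {s\<in>S. cox_length G S (w \<otimes>\<^bsub>G\<^esub> s) < cox_length G S w}"

definition gamma_edge :: "('a, 'b) monoid_scheme \<Rightarrow> 'a set \<Rightarrow> 'a \<Rightarrow> 'a \<Rightarrow> 'a \<Rightarrow> 'a \<Rightarrow> bool" where
  "gamma_edge G S u v x y \<longleftrightarrow> x \<in> bruhat_interval G S u v \<and> y \<in> bruhat_interval G S u v \<and>
     x \<noteq> y \<and> (\<exists>t\<in>reflections G S. y = x \<otimes>\<^bsub>G\<^esub> t)"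

definition gamma_automorphism :: "('a, 'b) monoid_scheme \<Rightarrow> 'a set \<Rightarrow> 'a \<Rightarrow> 'a \<Rightarrow> ('a \<Rightarrow> 'a) \<Rightarrow> bool" where
  "gamma_automorphism G S u v f \<longleftrightarrow>
     bij_betw f (bruhat_interval G S u v) (bruhat_interval G S u v) \<and>
     (\<forall>x\<in>bruhat_interval G S u v. \<forall>y\<in>bruhat_interval G S u v.
        gamma_edge G S u v (f x) (f y) \<longleftrightarrow> gamma_edge G S u v x y)"

end

theory Submission
  imports Defs
begin


fun cnt :: "('a,'b) monoid_scheme \<Rightarrow> 'a list \<Rightarrow> 'a \<Rightarrow> nat" where
  "cnt G [] r = 0"
| "cnt G (c # w) r = (if c = r then 1 else 0) + cnt G w (inv\<^bsub>G\<^esub> c \<otimes>\<^bsub>G\<^esub> r \<otimes>\<^bsub>G\<^esub> c)"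

lemma sum_split_nat: "(\<Sum>i<k+j. f i) = (\<Sum>i<k. f i) + (\<Sum>i<j. f (k+i::nat)) " for f :: "nat \<Rightarrow> nat"
  by (induction j) auto

locale coxsys = group G for G :: "('a,'b) monoid_scheme" (structure) +
  fixes S :: "'a set" and m :: "'a \<Rightarrow> 'a \<Rightarrow> nat"
  assumes S_sub: "S \<subseteq> carrier G"
  and gen: "\<forall>g\<in>carrier G. \<exists>ws. set ws \<subseteq> S \<and> word_prod G ws = g"
  and cm: "coxeter_matrix S m"
  and rels: "\<forall>s\<in>S. \<forall>t\<in>S. m s t > 0 \<longrightarrow> (s \<otimes> t) [^] (m s t) = \<one>"
  and pres: "\<forall>ws. set ws \<subseteq> S \<longrightarrow> word_prod G ws = \<one> \<longrightarrow> cox_equiv S m ws []"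
begin

lemma cancel1[simp]: "x \<in> carrier G \<Longrightarrow> y \<in> carrier G \<Longrightarrow> inv x \<otimes> (x \<otimes> y) = y"
  by (simp add: m_assoc[symmetric])

lemma cancel2[simp]: "x \<in> carrier G \<Longrightarrow> y \<in> carrier G \<Longrightarrow> x \<otimes> (inv x \<otimes> y) = y"
  by (simp add: m_assoc[symmetric])

lemma S_car: "s \<in> S \<Longrightarrow> s \<in> carrier G" using S_sub by auto

lemma S_sq: "s \<in> S \<Longrightarrow> s \<otimes> s = \<one>"
proof -
  assume s: "s \<in> S"
  have "m s s = 1" using cm s unfolding coxeter_matrix_def by auto
  with rels s have "(s \<otimes> s) [^] (1::nat) = \<one>" by force
  then show ?thesis using s S_car by simp
qed

lemma S_inv: "s \<in> S \<Longrightarrow> inv s = s"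
  using S_sq S_car inv_equality by blast

lemma wp_simps[simp]: "word_prod G [] = \<one>" "word_prod G (c # w) = c \<otimes> word_prod G w"
  by (simp_all add: word_prod_def)

lemma wp_car: "set w \<subseteq> carrier G \<Longrightarrow> word_prod G w \<in> carrier G"
  by (induction w) auto

lemma wp_carS: "set w \<subseteq> S \<Longrightarrow> word_prod G w \<in> carrier G"
  using wp_car S_sub by blast

lemma wp_append: "set a \<subseteq> carrier G \<Longrightarrow> set b \<subseteq> carrier G \<Longrightarrow>
   word_prod G (a @ b) = word_prod G a \<otimes> word_prod G b"
  by (induction a) (auto simp: m_assoc wp_car)

lemma wp_appendS: "set a \<subseteq> S \<Longrightarrow> set b \<subseteq> S \<Longrightarrow>
   word_prod G (a @ b) = word_prod G a \<otimes> word_prod G b"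
  using wp_append S_sub by blast

lemma wp_rev: "set w \<subseteq> S \<Longrightarrow> word_prod G (rev w) = inv (word_prod G w)"
proof (induction w)
  case Nil then show ?case by simp
next
  case (Cons c w)
  then have c: "c \<in> S" and w: "set w \<subseteq> S" by auto
  have "word_prod G (rev (c # w)) = word_prod G (rev w) \<otimes> word_prod G [c]"
    using wp_appendS[of "rev w" "[c]"] c w by simp
  also have "\<dots> = inv (word_prod G w) \<otimes> inv c" using Cons c S_inv S_car by simp
  also have "\<dots> = inv (c \<otimes> word_prod G w)" using c S_car wp_carS[OF w] by (simp add: inv_mult_group)
  finally show ?case by simp
qed

lemma cnt_append: "set a \<subseteq> carrier G \<Longrightarrow> set b \<subseteq> carrier G \<Longrightarrow> r \<in> carrier G \<Longrightarrow>
  cnt G (a @ b) r = cnt G a r + cnt G b (inv (word_prod G a) \<otimes> r \<otimes> word_prod G a)"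
proof (induction a arbitrary: r)
  case Nil then show ?case by simp
next
  case (Cons c a)
  then have c: "c \<in> carrier G" and a: "set a \<subseteq> carrier G" by auto
  have A: "word_prod G a \<in> carrier G" using wp_car a by auto
  have e: "inv (word_prod G a) \<otimes> (inv c \<otimes> r \<otimes> c) \<otimes> word_prod G a
      = inv (c \<otimes> word_prod G a) \<otimes> r \<otimes> (c \<otimes> word_prod G a)"
    using c A Cons.prems by (simp add: inv_mult_group m_assoc)
  show ?case using Cons.IH[of "inv c \<otimes> r \<otimes> c"] Cons.prems c a e by simp
qed

lemma cnt_appendS: "set a \<subseteq> S \<Longrightarrow> set b \<subseteq> S \<Longrightarrow> r \<in> carrier G \<Longrightarrow>
  cnt G (a @ b) r = cnt G a r + cnt G b (inv (word_prod G a) \<otimes> r \<otimes> word_prod G a)"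
  using cnt_append S_sub by blast

lemma cnt_delete: "set w \<subseteq> S \<Longrightarrow> r \<in> carrier G \<Longrightarrow> cnt G w r > 0 \<Longrightarrow>
   \<exists>xs c ys. w = xs @ c # ys \<and> r \<otimes> word_prod G w = word_prod G (xs @ ys)"
proof (induction w arbitrary: r)
  case Nil then show ?case by simp
next
  case (Cons c w)
  then have c: "c \<in> S" and w: "set w \<subseteq> S" by auto
  have cc: "c \<in> carrier G" using c S_car by auto
  have W: "word_prod G w \<in> carrier G" using wp_carS w by auto
  show ?case
  proof (cases "c = r")
    case True
    have "r \<otimes> word_prod G (c # w) = word_prod G w"
      using True S_sq[OF c] cc W by (simp add: m_assoc[symmetric])
    then show ?thesis by (intro exI[of _ "[]"]) auto
  next
    case False
    let ?r = "inv c \<otimes> r \<otimes> c"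
    have "cnt G w ?r > 0" using Cons.prems False by simp
    then obtain xs d ys where w1: "w = xs @ d # ys" and e: "?r \<otimes> word_prod G w = word_prod G (xs @ ys)"
      using Cons.IH[OF w] cc Cons.prems by blast
    have "r \<otimes> word_prod G (c # w) = c \<otimes> (?r \<otimes> word_prod G w)"
      using cc W Cons.prems by (simp add: m_assoc[symmetric])
    also have "\<dots> = word_prod G ((c # xs) @ ys)" using e by simp
    finally show ?thesis using w1 by (intro exI[of _ "c # xs"]) auto
  qed
qed

lemma pow_swap: "a \<in> carrier G \<Longrightarrow> b \<in> carrier G \<Longrightarrow> a \<otimes> (b \<otimes> a) [^] (j::nat) = (a \<otimes> b) [^] j \<otimes> a"
proof (induction j)
  case 0 then show ?case by simp
next
  case (Suc j)
  have "a \<otimes> (b \<otimes> a) [^] Suc j = (a \<otimes> (b \<otimes> a) [^] j) \<otimes> (b \<otimes> a)"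
    using Suc.prems by (simp add: m_assoc)
  also have "\<dots> = (a \<otimes> b) [^] j \<otimes> (a \<otimes> b) \<otimes> a" using Suc by (simp add: m_assoc)
  also have "\<dots> = (a \<otimes> b) [^] Suc j \<otimes> a" using Suc.prems by simp
  finally show ?case .
qed

lemma rel_word_Suc: "rel_word s t (Suc j) = rel_word s t j @ [s, t]"
proof -
  have "replicate (Suc j) [s,t] = replicate j [s,t] @ [[s,t]]" by (simp add: replicate_append_same)
  then show ?thesis unfolding rel_word_def by simp
qed

lemma rel_word_0: "rel_word s t 0 = []" by (simp add: rel_word_def)

lemma rel_word_set: "set (rel_word s t j) \<subseteq> {s, t}"
proof (induction j)
  case 0 show ?case by (simp add: rel_word_0)
next
  case (Suc j) then show ?case unfolding rel_word_Suc by simp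
qed

lemma rel_word_setS: "s \<in> S \<Longrightarrow> t \<in> S \<Longrightarrow> set (rel_word s t j) \<subseteq> S"
  using rel_word_set[of s t j] by auto

lemma rel_word_len: "length (rel_word s t j) = 2 * j"
proof (induction j)
  case 0 show ?case by (simp add: rel_word_0)
next
  case (Suc j) then show ?case unfolding rel_word_Suc by simp
qed

lemma rel_word_wp: "s \<in> S \<Longrightarrow> t \<in> S \<Longrightarrow> word_prod G (rel_word s t j) = (s \<otimes> t) [^] j"
proof (induction j)
  case 0 then show ?case by (simp add: rel_word_0)
next
  case (Suc j)
  have sc: "s \<in> carrier G" "t \<in> carrier G" using Suc.prems S_car by auto
  have "set (rel_word s t j) \<subseteq> S" using rel_word_setS Suc.prems by simp
  then have "word_prod G (rel_word s t (Suc j)) = word_prod G (rel_word s t j) \<otimes> word_prod G [s,t]"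
    unfolding rel_word_Suc using wp_appendS[of "rel_word s t j" "[s,t]"] Suc.prems by simp
  also have "\<dots> = (s \<otimes> t) [^] j \<otimes> (s \<otimes> t)" using Suc sc by simp
  finally show ?case using sc by simp
qed

lemma conj_iff: "a \<in> carrier G \<Longrightarrow> r \<in> carrier G \<Longrightarrow> X \<in> carrier G \<Longrightarrow>
   (a = inv X \<otimes> r \<otimes> X) \<longleftrightarrow> (X \<otimes> a \<otimes> inv X = r)"
proof -
  assume h: "a \<in> carrier G" "r \<in> carrier G" "X \<in> carrier G"
  have "(a = inv X \<otimes> r \<otimes> X) = (a = inv X \<otimes> (r \<otimes> X))" using h by (simp add: m_assoc)
  also have "\<dots> = (r \<otimes> X = X \<otimes> a)" by (rule inv_solve_left) (use h in auto)
  also have "(X \<otimes> a \<otimes> inv X = r) = (X \<otimes> a = r \<otimes> X)" by (rule inv_solve_right') (use h in auto)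
  ultimately show ?thesis by auto
qed

lemma cnt_rel: "s \<in> S \<Longrightarrow> t \<in> S \<Longrightarrow> r \<in> carrier G \<Longrightarrow>
  cnt G (rel_word s t j) r = (\<Sum>i<2*j. if (s \<otimes> t) [^] i \<otimes> s = r then 1 else 0)"
proof (induction j)
  case 0 then show ?case by (simp add: rel_word_def)
next
  case (Suc j)
  have s: "s \<in> carrier G" and t: "t \<in> carrier G" using Suc.prems S_car by auto
  let ?X = "(s \<otimes> t) [^] j"
  have X: "?X \<in> carrier G" using s t by simp
  have RS: "set (rel_word s t j) \<subseteq> S" using rel_word_setS Suc.prems by simp
  have key: "s \<otimes> inv ?X = ?X \<otimes> s"
  proof -
    have "inv ?X = (inv (s \<otimes> t)) [^] j" using nat_pow_inv[of "s \<otimes> t" j] s t by simp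
    also have "inv (s \<otimes> t) = t \<otimes> s" using s t Suc.prems by (simp add: inv_mult_group S_inv)
    finally have "inv ?X = (t \<otimes> s) [^] j" .
    then show ?thesis using pow_swap[OF s t] by simp
  qed
  have e1: "?X \<otimes> s \<otimes> inv ?X = (s \<otimes> t) [^] (2*j) \<otimes> s"
  proof -
    have "?X \<otimes> s \<otimes> inv ?X = ?X \<otimes> (s \<otimes> inv ?X)" using s X by (simp add: m_assoc)
    also have "\<dots> = ?X \<otimes> ?X \<otimes> s" using key s X by (simp add: m_assoc)
    also have "?X \<otimes> ?X = (s \<otimes> t) [^] (2*j)" using nat_pow_mult[of "s \<otimes> t" j j] s t by (simp add: mult_2)
    finally show ?thesis .
  qed
  have e2: "?X \<otimes> (inv s \<otimes> t \<otimes> s) \<otimes> inv ?X = (s \<otimes> t) [^] (Suc (2*j)) \<otimes> s"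
  proof -
    have "?X \<otimes> (inv s \<otimes> t \<otimes> s) \<otimes> inv ?X = ?X \<otimes> (s \<otimes> t) \<otimes> (s \<otimes> inv ?X)"
      using s t X Suc.prems by (simp add: m_assoc S_inv)
    also have "\<dots> = ?X \<otimes> (s \<otimes> t) \<otimes> ?X \<otimes> s" using key s t X by (simp add: m_assoc)
    also have "\<dots> = (s \<otimes> t) [^] (Suc j + j) \<otimes> s"
    proof -
      have "?X \<otimes> (s \<otimes> t) = (s \<otimes> t) [^] Suc j" by simp
      then have "?X \<otimes> (s \<otimes> t) \<otimes> ?X = (s \<otimes> t) [^] (Suc j + j)"
        using nat_pow_mult[of "s \<otimes> t" "Suc j" j] s t by simp
      then show ?thesis by simp
    qed
    finally show ?thesis by (simp add: mult_2)
  qed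
  have "cnt G (rel_word s t (Suc j)) r = cnt G (rel_word s t j) r + cnt G [s, t] (inv ?X \<otimes> r \<otimes> ?X)"
    using cnt_appendS[OF RS _ Suc.prems(3), of "[s,t]"] Suc.prems rel_word_wp
    by (simp add: rel_word_Suc)
  also have "cnt G [s, t] (inv ?X \<otimes> r \<otimes> ?X) =
     (if (s \<otimes> t) [^] (2*j) \<otimes> s = r then 1 else 0) + (if (s \<otimes> t) [^] (Suc (2*j)) \<otimes> s = r then 1 else 0)"
  proof -
    have r': "inv ?X \<otimes> r \<otimes> ?X \<in> carrier G" using X Suc.prems by simp
    have i1: "(s = inv ?X \<otimes> r \<otimes> ?X) = ((s \<otimes> t) [^] (2*j) \<otimes> s = r)"
      using conj_iff[OF s Suc.prems(3) X] e1 by simp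
    have "(t = inv s \<otimes> (inv ?X \<otimes> r \<otimes> ?X) \<otimes> s) = (s \<otimes> t \<otimes> inv s = inv ?X \<otimes> r \<otimes> ?X)"
      using conj_iff[OF t r' s] by simp
    also have "\<dots> = (inv s \<otimes> t \<otimes> s = inv ?X \<otimes> r \<otimes> ?X)" using Suc.prems S_inv by simp
    also have "\<dots> = ((s \<otimes> t) [^] (Suc (2*j)) \<otimes> s = r)"
      using conj_iff[OF _ Suc.prems(3) X, of "inv s \<otimes> t \<otimes> s"] e2 s t by simp
    finally show ?thesis using i1 by simp
  qed
  finally show ?case using Suc by simp
qed

lemma cnt_rel_even: "s \<in> S \<Longrightarrow> t \<in> S \<Longrightarrow> r \<in> carrier G \<Longrightarrow> (s \<otimes> t) [^] k = \<one> \<Longrightarrow>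
  even (cnt G (rel_word s t k) r)"
proof -
  assume a: "s \<in> S" "t \<in> S" "r \<in> carrier G" "(s \<otimes> t) [^] k = \<one>"
  let ?f = "\<lambda>i::nat. if (s \<otimes> t) [^] i \<otimes> s = r then 1 else (0::nat)"
  have per: "?f (k + i) = ?f i" for i
  proof -
    have "(s \<otimes> t) [^] (k + i) = (s \<otimes> t) [^] k \<otimes> (s \<otimes> t) [^] i"
      using nat_pow_mult[of "s \<otimes> t" k i] a S_car by simp
    then have "(s \<otimes> t) [^] (k + i) = (s \<otimes> t) [^] i" using a S_car by simp
    then show ?thesis by simp
  qed
  have "cnt G (rel_word s t k) r = (\<Sum>i<k+k. ?f i)" using cnt_rel[OF a(1-3)] by (simp add: mult_2)
  also have "\<dots> = 2 * (\<Sum>i<k. ?f i)" using sum_split_nat[of ?f k k] per by simp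
  finally show ?thesis by simp
qed

end



context coxsys begin

lemma equiv_inv: "cox_equiv S m w w' \<Longrightarrow> w = w' \<or> (set w \<subseteq> S \<and> set w' \<subseteq> S \<and>
   (even (length w) = even (length w')) \<and> (\<forall>r\<in>carrier G. even (cnt G w r) = even (cnt G w' r)))"
proof (induction rule: cox_equiv.induct)
  case (refl w) then show ?case by simp
next
  case (sym w w') then show ?case
  proof (elim disjE)
    assume "w = w'" then show ?thesis by simp
  next
    assume h: "set w \<subseteq> S \<and> set w' \<subseteq> S \<and> even (length w) = even (length w') \<and>
      (\<forall>r\<in>carrier G. even (cnt G w r) = even (cnt G w' r))"
    then show ?thesis by (intro disjI2) simp
  qed
next
  case (trans w1 w2 w3)
  show ?case
  proof (cases "w1 = w2")
    case True then show ?thesis using trans.IH(2) by simp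
  next
    case False
    then have h1: "set w1 \<subseteq> S \<and> set w2 \<subseteq> S \<and> even (length w1) = even (length w2) \<and>
      (\<forall>r\<in>carrier G. even (cnt G w1 r) = even (cnt G w2 r))" using trans.IH(1) by simp
    show ?thesis
    proof (cases "w2 = w3")
      case True then show ?thesis using h1 by simp
    next
      case False
      then have h2: "set w2 \<subseteq> S \<and> set w3 \<subseteq> S \<and> even (length w2) = even (length w3) \<and>
        (\<forall>r\<in>carrier G. even (cnt G w2 r) = even (cnt G w3 r))" using trans.IH(2) by simp
      show ?thesis using h1 h2 by (intro disjI2) simp
    qed
  qed
next
  case (rel s t xs ys)
  let ?R = "rel_word s t (m s t)"
  have RS: "set ?R \<subseteq> S" using rel_word_setS rel by simp
  have R1: "word_prod G ?R = \<one>" using rel_word_wp rel rels by auto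
  have "even (cnt G (xs @ ?R @ ys) r) = even (cnt G (xs @ ys) r)" if r: "r \<in> carrier G" for r
  proof -
    let ?r = "inv (word_prod G xs) \<otimes> r \<otimes> word_prod G xs"
    have r1: "?r \<in> carrier G" using r wp_carS rel by simp
    have "cnt G (xs @ ?R @ ys) r = cnt G xs r + cnt G (?R @ ys) ?r"
      using cnt_appendS[of xs "?R @ ys" r] rel RS r by simp
    also have "cnt G (?R @ ys) ?r = cnt G ?R ?r + cnt G ys ?r"
      using cnt_appendS[of ?R ys ?r] rel RS r1 R1 by simp
    finally have e1: "cnt G (xs @ ?R @ ys) r = cnt G xs r + cnt G ?R ?r + cnt G ys ?r" by simp
    have e2: "cnt G (xs @ ys) r = cnt G xs r + cnt G ys ?r"
      using cnt_appendS[of xs ys r] rel r by simp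
    have "even (cnt G ?R ?r)" using cnt_rel_even[OF rel(1,2) r1] rel rels by auto
    then show ?thesis using e1 e2 by simp
  qed
  moreover have "even (length (xs @ ?R @ ys)) = even (length (xs @ ys))"
    by (simp add: rel_word_len)
  moreover have "set (xs @ ?R @ ys) \<subseteq> S" "set (xs @ ys) \<subseteq> S" using rel RS by auto
  ultimately show ?case by (intro disjI2) simp
qed

lemma same_prod_parity:
  assumes a: "set w1 \<subseteq> S" and b: "set w2 \<subseteq> S" and e: "word_prod G w1 = word_prod G w2"
  shows "even (length w1) = even (length w2)"
    and "r \<in> carrier G \<Longrightarrow> even (cnt G w1 r) = even (cnt G w2 r)"
proof -
  have rb: "set (rev w2) \<subseteq> S" using b by simp
  have W: "word_prod G w2 \<in> carrier G" using wp_carS b by simp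
  have p1: "word_prod G (w1 @ rev w2) = \<one>" using wp_appendS[OF a rb] wp_rev[OF b] e W by simp
  have p2: "word_prod G (w2 @ rev w2) = \<one>" using wp_appendS[OF b rb] wp_rev[OF b] W by simp
  have q1: "cox_equiv S m (w1 @ rev w2) []" using pres p1 a rb by auto
  have q2: "cox_equiv S m (w2 @ rev w2) []" using pres p2 b rb by auto
  note i1 = equiv_inv[OF q1] and i2 = equiv_inv[OF q2]
  have l1: "even (length (w1 @ rev w2))" using i1 by auto
  then show "even (length w1) = even (length w2)" by simp
  assume r: "r \<in> carrier G"
  have c1: "even (cnt G (w1 @ rev w2) r)" using i1 r by auto
  have c2: "even (cnt G (w2 @ rev w2) r)" using i2 r by auto
  show "even (cnt G w1 r) = even (cnt G w2 r)"
    using c1 c2 cnt_appendS[OF a rb r] cnt_appendS[OF b rb r] e by simp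
qed

abbreviation len where "len \<equiv> cox_length G S"

lemma len_le: "set w \<subseteq> S \<Longrightarrow> len (word_prod G w) \<le> length w"
  unfolding cox_length_def by (rule Least_le) auto

lemma red_word: "g \<in> carrier G \<Longrightarrow> \<exists>w. set w \<subseteq> S \<and> word_prod G w = g \<and> length w = len g"
proof -
  assume g: "g \<in> carrier G"
  then obtain ws where "set ws \<subseteq> S" "word_prod G ws = g" using gen by blast
  then have "\<exists>n ws. length ws = n \<and> set ws \<subseteq> S \<and> word_prod G ws = g" by blast
  from LeastI_ex[OF this] show ?thesis unfolding cox_length_def by blast
qed

lemma len_parity: "set w \<subseteq> S \<Longrightarrow> even (len (word_prod G w)) = even (length w)"
  using red_word[OF wp_carS] same_prod_parity(1) by metis

lemma len_S_le: "s \<in> S \<Longrightarrow> g \<in> carrier G \<Longrightarrow> len (s \<otimes> g) \<le> len g + 1"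
proof -
  assume s: "s \<in> S" and g: "g \<in> carrier G"
  obtain w where w: "set w \<subseteq> S" "word_prod G w = g" "length w = len g" using red_word g by blast
  show ?thesis using len_le[of "s # w"] w s by simp
qed

lemma len_S_par: "s \<in> S \<Longrightarrow> g \<in> carrier G \<Longrightarrow> len (s \<otimes> g) \<noteq> len g"
proof -
  assume s: "s \<in> S" and g: "g \<in> carrier G"
  obtain w where w: "set w \<subseteq> S" "word_prod G w = g" "length w = len g" using red_word g by blast
  show ?thesis using len_parity[of "s # w"] w s by auto
qed

lemma SS: "s \<in> S \<Longrightarrow> g \<in> carrier G \<Longrightarrow> s \<otimes> (s \<otimes> g) = g"
  using S_sq S_car by (simp add: m_assoc[symmetric])

lemma len_S_ge: "s \<in> S \<Longrightarrow> g \<in> carrier G \<Longrightarrow> len g \<le> len (s \<otimes> g) + 1"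
  using len_S_le[of s "s \<otimes> g"] SS S_car by simp

lemma len_inv_le: "g \<in> carrier G \<Longrightarrow> len (inv g) \<le> len g"
proof -
  assume g: "g \<in> carrier G"
  obtain w where w: "set w \<subseteq> S" "word_prod G w = g" "length w = len g" using red_word g by blast
  show ?thesis using len_le[of "rev w"] wp_rev w by simp
qed

lemma len_inv: "g \<in> carrier G \<Longrightarrow> len (inv g) = len g"
  using len_inv_le[of g] len_inv_le[of "inv g"] by simp

definition eta where "eta g r = odd (cnt G (SOME w. set w \<subseteq> S \<and> word_prod G w = g) r)"

lemma eta_word: "set w \<subseteq> S \<Longrightarrow> r \<in> carrier G \<Longrightarrow> eta (word_prod G w) r = odd (cnt G w r)"
proof -
  assume w: "set w \<subseteq> S" and r: "r \<in> carrier G"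
  let ?w = "SOME v. set v \<subseteq> S \<and> word_prod G v = word_prod G w"
  have "set ?w \<subseteq> S \<and> word_prod G ?w = word_prod G w" by (rule someI[of _ w]) (use w in auto)
  then show ?thesis unfolding eta_def using same_prod_parity(2)[OF _ w _ r, of ?w] by auto
qed

lemma eta_mult: "g \<in> carrier G \<Longrightarrow> h \<in> carrier G \<Longrightarrow> r \<in> carrier G \<Longrightarrow>
  eta (g \<otimes> h) r = (eta g r \<noteq> eta h (inv g \<otimes> r \<otimes> g))"
proof -
  assume g: "g \<in> carrier G" and h: "h \<in> carrier G" and r: "r \<in> carrier G"
  obtain a where a: "set a \<subseteq> S" "word_prod G a = g" using gen g by blast
  obtain b where b: "set b \<subseteq> S" "word_prod G b = h" using gen h by blast
  have "eta (g \<otimes> h) r = odd (cnt G (a @ b) r)"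
    using eta_word[of "a @ b" r] wp_appendS a b r by simp
  also have "\<dots> = (odd (cnt G a r) \<noteq> odd (cnt G b (inv g \<otimes> r \<otimes> g)))"
    using cnt_appendS[of a b r] a b r by simp
  also have "\<dots> = (eta g r \<noteq> eta h (inv g \<otimes> r \<otimes> g))"
    using eta_word[OF a(1) r] eta_word[OF b(1), of "inv g \<otimes> r \<otimes> g"] a b r g by simp
  finally show ?thesis .
qed

lemma eta_one: "r \<in> carrier G \<Longrightarrow> eta \<one> r = False"
  using eta_word[of "[]" r] by simp

lemma eta_S: "s \<in> S \<Longrightarrow> eta s s"
  using eta_word[of "[s]" s] S_car by simp

abbreviation refl where "refl \<equiv> reflections G S"

lemma refl_car: "r \<in> refl \<Longrightarrow> r \<in> carrier G"
  unfolding reflections_def using S_car by auto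

lemma S_refl: "s \<in> S \<Longrightarrow> s \<in> refl"
proof -
  assume s: "s \<in> S"
  then have "s = \<one> \<otimes> s \<otimes> inv \<one>" using S_car by simp
  then show ?thesis unfolding reflections_def using s by blast
qed

lemma refl_conj: "r \<in> refl \<Longrightarrow> g \<in> carrier G \<Longrightarrow> g \<otimes> r \<otimes> inv g \<in> refl"
proof -
  assume r: "r \<in> refl" and g: "g \<in> carrier G"
  then obtain h s where hs: "h \<in> carrier G" "s \<in> S" "r = h \<otimes> s \<otimes> inv h"
    unfolding reflections_def by auto
  have "g \<otimes> r \<otimes> inv g = (g \<otimes> h) \<otimes> s \<otimes> inv (g \<otimes> h)"
    using hs g S_car by (simp add: m_assoc inv_mult_group)
  then show ?thesis unfolding reflections_def using hs g by blast
qed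

lemma refl_sq: "r \<in> refl \<Longrightarrow> r \<otimes> r = \<one>"
proof -
  assume r: "r \<in> refl"
  then obtain h s where hs: "h \<in> carrier G" "s \<in> S" "r = h \<otimes> s \<otimes> inv h"
    unfolding reflections_def by auto
  have sc: "s \<in> carrier G" using hs S_car by auto
  have "r \<otimes> r = h \<otimes> (s \<otimes> s) \<otimes> inv h" using hs sc by (simp add: m_assoc)
  then show ?thesis using hs S_sq by simp
qed

lemma refl_inv: "r \<in> refl \<Longrightarrow> inv r = r"
  using refl_sq refl_car inv_equality by blast

lemma eta_refl: "r \<in> refl \<Longrightarrow> eta r r"
proof -
  assume r: "r \<in> refl"
  then obtain g s where hs: "g \<in> carrier G" "s \<in> S" "r = g \<otimes> s \<otimes> inv g"
    unfolding reflections_def by auto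
  have sc: "s \<in> carrier G" using hs S_car by auto
  have rc: "r \<in> carrier G" using r refl_car by auto
  have c1: "inv g \<otimes> r \<otimes> g = s" using hs sc by (simp add: m_assoc)
  have c2: "inv s \<otimes> s \<otimes> s = s" using sc by simp
  have "eta \<one> r = (eta g r \<noteq> eta (inv g) s)"
    using eta_mult[of g "inv g" r] hs rc c1 by simp
  then have e1: "eta (inv g) s = eta g r" using eta_one rc by simp
  have "eta r r = eta (g \<otimes> (s \<otimes> inv g)) r" using hs sc by (simp add: m_assoc)
  also have "\<dots> = (eta g r \<noteq> eta (s \<otimes> inv g) s)" using eta_mult hs sc rc c1 by simp
  also have "eta (s \<otimes> inv g) s = (eta s s \<noteq> eta (inv g) s)" using eta_mult[of s "inv g" s] hs sc c2 by simp
  finally show ?thesis using e1 eta_S hs by simp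
qed

lemma lemA: "r \<in> carrier G \<Longrightarrow> y \<in> carrier G \<Longrightarrow> eta y r \<Longrightarrow> len (r \<otimes> y) < len y"
proof -
  assume r: "r \<in> carrier G" and y: "y \<in> carrier G" and e: "eta y r"
  obtain w where w: "set w \<subseteq> S" "word_prod G w = y" "length w = len y" using red_word y by blast
  have "odd (cnt G w r)" using eta_word w r e by auto
  then have "cnt G w r > 0" by (cases "cnt G w r") auto
  then obtain xs c ys where d: "w = xs @ c # ys" "r \<otimes> y = word_prod G (xs @ ys)"
    using cnt_delete w r by blast
  have "set (xs @ ys) \<subseteq> S" using d w by auto
  then have "len (r \<otimes> y) \<le> length (xs @ ys)" using d len_le by metis
  then show ?thesis using d w by simp
qed

lemma lemB: "r \<in> refl \<Longrightarrow> y \<in> carrier G \<Longrightarrow> len (r \<otimes> y) < len y \<Longrightarrow> eta y r"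
proof (rule ccontr)
  assume r: "r \<in> refl" and y: "y \<in> carrier G" and l: "len (r \<otimes> y) < len y" and n: "\<not> eta y r"
  have rc: "r \<in> carrier G" using r refl_car by auto
  have "eta (r \<otimes> y) r = (eta r r \<noteq> eta y (inv r \<otimes> r \<otimes> r))" using eta_mult rc y by simp
  also have "inv r \<otimes> r \<otimes> r = r" using rc by simp
  finally have "eta (r \<otimes> y) r" using eta_refl r n by simp
  then have "len (r \<otimes> (r \<otimes> y)) < len (r \<otimes> y)" using lemA rc y by simp
  also have "r \<otimes> (r \<otimes> y) = y" using refl_sq r rc y by (simp add: m_assoc[symmetric])
  finally show False using l by simp
qed

end



context coxsys begin

abbreviation ble where "ble \<equiv> bruhat_le G S"
abbreviation step where "step \<equiv> bruhat_step G S"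

lemma step_car: "step x y \<Longrightarrow> x \<in> carrier G \<and> y \<in> carrier G"
  unfolding bruhat_step_def using refl_car by auto

lemma ble_car: "ble x y \<Longrightarrow> x \<in> carrier G \<and> y \<in> carrier G"
  unfolding bruhat_le_def
proof (elim conjE)
  assume x: "x \<in> carrier G" and r: "(bruhat_step G S)\<^sup>*\<^sup>* x y"
  from r show "x \<in> carrier G \<and> y \<in> carrier G"
    by (induction rule: rtranclp_induct) (use x step_car in auto)
qed

lemma ble_refl: "x \<in> carrier G \<Longrightarrow> ble x x"
  unfolding bruhat_le_def by simp

lemma ble_step: "step x y \<Longrightarrow> ble x y"
  unfolding bruhat_le_def using step_car by auto

lemma ble_trans: "ble x y \<Longrightarrow> ble y z \<Longrightarrow> ble x z"
  unfolding bruhat_le_def by auto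

lemma step_right: "t \<in> refl \<Longrightarrow> g \<in> carrier G \<Longrightarrow> len g < len (g \<otimes> t) \<Longrightarrow> step g (g \<otimes> t)"
  unfolding bruhat_step_def by auto

lemma step_left: "r \<in> refl \<Longrightarrow> g \<in> carrier G \<Longrightarrow> len g < len (r \<otimes> g) \<Longrightarrow> step g (r \<otimes> g)"
proof -
  assume r: "r \<in> refl" and g: "g \<in> carrier G" and l: "len g < len (r \<otimes> g)"
  have rc: "r \<in> carrier G" using r refl_car by auto
  have t: "inv g \<otimes> r \<otimes> inv (inv g) \<in> refl" by (rule refl_conj[OF r]) (use g in simp)
  have e: "r \<otimes> g = g \<otimes> (inv g \<otimes> r \<otimes> inv (inv g))" using rc g by (simp add: m_assoc)
  show ?thesis unfolding e by (rule step_right[OF t g]) (use l e in simp)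
qed

lemma len_S_gt: "s \<in> S \<Longrightarrow> g \<in> carrier G \<Longrightarrow> \<not> len (s \<otimes> g) < len g \<Longrightarrow> len g < len (s \<otimes> g)"
  using len_S_par by fastforce

lemma hard:
  assumes x: "x \<in> carrier G" and t: "t \<in> refl" and y: "y = x \<otimes> t" and xy: "len x < len y"
    and s: "s \<in> S" and sy: "len (s \<otimes> y) < len y" and ne: "s \<otimes> x \<noteq> y"
  shows "len (s \<otimes> x) < len (s \<otimes> y)"
proof -
  have tc: "t \<in> carrier G" using t refl_car by auto
  have yc: "y \<in> carrier G" using x tc y by simp
  have sc: "s \<in> carrier G" using s S_car by auto
  let ?r = "y \<otimes> t \<otimes> inv y"
  have r: "?r \<in> refl" using refl_conj t yc by simp
  have rc: "?r \<in> carrier G" using r refl_car by auto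
  have ry: "?r \<otimes> y = x"
  proof -
    have "?r \<otimes> y = y \<otimes> t" using yc tc by (simp add: m_assoc)
    also have "\<dots> = x \<otimes> (t \<otimes> t)" using y x tc by (simp add: m_assoc)
    also have "\<dots> = x" using refl_sq[OF t] x by simp
    finally show ?thesis .
  qed
  have ey: "eta y ?r" using lemB[OF r yc] ry xy by simp
  obtain b where b: "set b \<subseteq> S" "word_prod G b = s \<otimes> y" "length b = len (s \<otimes> y)"
    using red_word[of "s \<otimes> y"] sc yc by auto
  have sb: "set (s # b) \<subseteq> S" "word_prod G (s # b) = y" using b s SS[OF s yc] by auto
  have "odd (cnt G (s # b) ?r)" using eta_word[OF sb(1) rc] sb(2) ey by simp
  then have "cnt G (s # b) ?r > 0" by (cases "cnt G (s # b) ?r") auto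
  then obtain xs c ys where d: "s # b = xs @ c # ys" "?r \<otimes> word_prod G (s # b) = word_prod G (xs @ ys)"
    using cnt_delete[OF sb(1) rc] by blast
  have xw: "x = word_prod G (xs @ ys)" using d(2) sb(2) ry by simp
  show ?thesis
  proof (cases xs)
    case Nil
    then have "x = word_prod G b" using d xw by simp
    then have "s \<otimes> x = y" using b SS[OF s yc] by simp
    then show ?thesis using ne by simp
  next
    case (Cons a xs')
    then have a: "a = s" and bb: "b = xs' @ c # ys" using d by auto
    have S': "set (xs' @ ys) \<subseteq> S" using b bb by auto
    have "x = s \<otimes> word_prod G (xs' @ ys)" using xw Cons a by simp
    then have "s \<otimes> x = word_prod G (xs' @ ys)" using SS[OF s] wp_carS[OF S'] by simp
    then have "len (s \<otimes> x) \<le> length (xs' @ ys)" using len_le[OF S'] by simp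
    then show ?thesis using b(3) bb by simp
  qed
qed

definition lo where "lo s x = (if len (s \<otimes> x) < len x then s \<otimes> x else x)"
definition hi where "hi s x = (if len (s \<otimes> x) < len x then x else s \<otimes> x)"

lemma single:
  assumes s: "s \<in> S" and st: "step x y"
  shows "ble (lo s x) (lo s y) \<and> ble (hi s x) (hi s y)"
proof -
  obtain t where t: "t \<in> refl" "y = x \<otimes> t" "len x < len y" and x: "x \<in> carrier G"
    using st unfolding bruhat_step_def by auto
  have tc: "t \<in> carrier G" using t refl_car by auto
  have y: "y \<in> carrier G" using x tc t by simp
  have sc: "s \<in> carrier G" using s S_car by auto
  have sxc: "s \<otimes> x \<in> carrier G" and syc: "s \<otimes> y \<in> carrier G" using sc x y by auto
  have sy: "s \<otimes> y = (s \<otimes> x) \<otimes> t" using t sc x tc by (simp add: m_assoc)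
  have sr: "s \<in> refl" using S_refl s by simp
  have A: "len (s \<otimes> g) < len g \<Longrightarrow> g \<in> carrier G \<Longrightarrow> ble (s \<otimes> g) g" for g
    using ble_step[OF step_left[OF sr, of "s \<otimes> g"]] SS[OF s] sc by simp
  have B: "\<not> len (s \<otimes> g) < len g \<Longrightarrow> g \<in> carrier G \<Longrightarrow> ble g (s \<otimes> g)" for g
    using ble_step[OF step_left[OF sr, of g]] len_S_gt[OF s] by simp
  have C: "len (s \<otimes> x) < len (s \<otimes> y) \<Longrightarrow> ble (s \<otimes> x) (s \<otimes> y)"
    using ble_step[OF step_right[OF t(1) sxc]] sy by simp
  have xy: "ble x y" using ble_step[OF st] .
  have lx1: "len (s \<otimes> x) \<le> len x + 1" "len x \<le> len (s \<otimes> x) + 1" using len_S_le len_S_ge s x by auto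
  have ly1: "len (s \<otimes> y) \<le> len y + 1" "len y \<le> len (s \<otimes> y) + 1" using len_S_le len_S_ge s y by auto
  have px: "len (s \<otimes> x) \<noteq> len x" and py: "len (s \<otimes> y) \<noteq> len y" using len_S_par s x y by auto
  show ?thesis
  proof (cases "s \<otimes> x = y")
    case True
    then have sy': "s \<otimes> y = x" using SS[OF s x] by simp
    have "lo s x = x" "lo s y = x" "hi s x = y" "hi s y = y"
      unfolding lo_def hi_def using True sy' t(3) by auto
    then show ?thesis using ble_refl x y by simp
  next
    case False
    show ?thesis
    proof (cases "len (s \<otimes> x) < len x"; cases "len (s \<otimes> y) < len y")
      assume dx: "len (s \<otimes> x) < len x" and dy: "len (s \<otimes> y) < len y"
      have "ble (s \<otimes> x) (s \<otimes> y)" using C lx1 ly1 dx dy t(3) by simp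
      then show ?thesis unfolding lo_def hi_def using dx dy xy by simp
    next
      assume dx: "len (s \<otimes> x) < len x" and dy: "\<not> len (s \<otimes> y) < len y"
      have "ble (s \<otimes> x) y" using ble_trans[OF A[OF dx x] xy] .
      moreover have "ble x (s \<otimes> y)" using ble_trans[OF xy B[OF dy y]] .
      ultimately show ?thesis unfolding lo_def hi_def using dx dy by simp
    next
      assume dx: "\<not> len (s \<otimes> x) < len x" and dy: "len (s \<otimes> y) < len y"
      have h: "ble (s \<otimes> x) (s \<otimes> y)" using C hard[OF x t(1) t(2) t(3) s dy False] by simp
      have "ble x (s \<otimes> y)" using ble_trans[OF B[OF dx x] h] .
      moreover have "ble (s \<otimes> x) y" using ble_trans[OF h A[OF dy y]] SS[OF s y] by simp
      ultimately show ?thesis unfolding lo_def hi_def using dx dy by simp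
    next
      assume dx: "\<not> len (s \<otimes> x) < len x" and dy: "\<not> len (s \<otimes> y) < len y"
      have "ble (s \<otimes> x) (s \<otimes> y)" using C lx1 ly1 px py dx dy t(3) by simp
      then show ?thesis unfolding lo_def hi_def using dx dy xy by simp
    qed
  qed
qed

lemma chain:
  assumes s: "s \<in> S" and le: "ble x y"
  shows "ble (lo s x) (lo s y) \<and> ble (hi s x) (hi s y)"
proof -
  have x: "x \<in> carrier G" and r: "(bruhat_step G S)\<^sup>*\<^sup>* x y" using le unfolding bruhat_le_def by auto
  have sc: "s \<in> carrier G" using s S_car by auto
  from r show ?thesis
  proof (induction rule: rtranclp_induct)
    case base
    have "lo s x \<in> carrier G" "hi s x \<in> carrier G" unfolding lo_def hi_def using sc x by auto
    then show ?case using ble_refl by simp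
  next
    case (step y z)
    then show ?case using single[OF s step(2)] ble_trans by blast
  qed
qed

lemma step_inv: "step x y \<Longrightarrow> step (inv x) (inv y)"
proof -
  assume st: "step x y"
  obtain t where t: "t \<in> refl" "y = x \<otimes> t" "len x < len y" and x: "x \<in> carrier G"
    using st unfolding bruhat_step_def by auto
  have tc: "t \<in> carrier G" using t refl_car by auto
  have y: "y \<in> carrier G" using x tc t by simp
  have t': "x \<otimes> t \<otimes> inv x \<in> refl" using refl_conj t x by simp
  have e: "inv y = inv x \<otimes> (x \<otimes> t \<otimes> inv x)"
    using t x tc refl_inv[OF t(1)] by (simp add: inv_mult_group m_assoc)
  have l: "len (inv x) < len (inv y)" using len_inv x y t(3) by simp
  show ?thesis unfolding e by (rule step_right[OF t']) (use x l e in auto)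
qed

lemma ble_inv: "ble x y \<Longrightarrow> ble (inv x) (inv y)"
proof -
  assume le: "ble x y"
  have x: "x \<in> carrier G" and r: "(bruhat_step G S)\<^sup>*\<^sup>* x y" using le unfolding bruhat_le_def by auto
  from r show ?thesis
  proof (induction rule: rtranclp_induct)
    case base then show ?case using ble_refl x by simp
  next
    case (step y z) then show ?case using ble_trans ble_step step_inv by blast
  qed
qed

definition loR where "loR s x = (if len (x \<otimes> s) < len x then x \<otimes> s else x)"
definition hiR where "hiR s x = (if len (x \<otimes> s) < len x then x else x \<otimes> s)"

lemma chainR:
  assumes s: "s \<in> S" and le: "ble x y"
  shows "ble (loR s x) (loR s y) \<and> ble (hiR s x) (hiR s y)"
proof -
  have sc: "s \<in> carrier G" using s S_car by auto
  have conv: "lo s (inv g) = inv (loR s g) \<and> hi s (inv g) = inv (hiR s g)" if g: "g \<in> carrier G" for g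
  proof -
    have e: "s \<otimes> inv g = inv (g \<otimes> s)" using g sc S_inv[OF s] by (simp add: inv_mult_group)
    have l: "len (s \<otimes> inv g) = len (g \<otimes> s)" using e len_inv g sc by simp
    show ?thesis unfolding lo_def hi_def loR_def hiR_def using e l len_inv g by simp
  qed
  have x: "x \<in> carrier G" and y: "y \<in> carrier G" using ble_car le by auto
  have c: "ble (lo s (inv x)) (lo s (inv y)) \<and> ble (hi s (inv x)) (hi s (inv y))"
    using chain[OF s ble_inv[OF le]] .
  have cx: "loR s x \<in> carrier G" "hiR s x \<in> carrier G" "loR s y \<in> carrier G" "hiR s y \<in> carrier G"
    unfolding loR_def hiR_def using x y sc by auto
  show ?thesis using c conv[OF x] conv[OF y] ble_inv cx by (metis inv_inv)
qed

lemma final: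
  assumes f_car: "\<forall>x\<in>carrier G. f x \<in> carrier G"
  and f_inv: "\<forall>x\<in>carrier G. f (f x) = x"
  and mono: "\<forall>x y. ble x y \<longrightarrow> ble (if D x then f x else x) (if D y then f y else y) \<and>
                                  ble (if D x then x else f x) (if D y then y else f y)"
  and stepD: "\<forall>x\<in>carrier G. D x \<longrightarrow> ble (f x) x"
  and stepND: "\<forall>x\<in>carrier G. \<not> D x \<longrightarrow> ble x (f x)"
  and edge: "\<forall>x\<in>carrier G. \<forall>y\<in>carrier G. (\<exists>t\<in>refl. f y = f x \<otimes> t) \<longleftrightarrow> (\<exists>t\<in>refl. y = x \<otimes> t)"
  and uv: "ble u v" "D v" "\<not> D u"
  shows "f ` bruhat_interval G S u v \<subseteq> bruhat_interval G S u v \<and> gamma_automorphism G S u v f"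
proof -
  let ?I = "bruhat_interval G S u v"
  have Ic: "x \<in> ?I \<Longrightarrow> x \<in> carrier G" for x unfolding bruhat_interval_def using ble_car by auto
  have maps: "f x \<in> ?I" if xI: "x \<in> ?I" for x
  proof -
    have ux: "ble u x" and xv: "ble x v" using xI unfolding bruhat_interval_def by auto
    have xc: "x \<in> carrier G" using Ic xI by simp
    have m1: "ble u (if D x then f x else x)" using mono ux uv by force
    have m2: "ble (if D x then x else f x) v" using mono xv uv by force
    have "ble u (f x)"
      using m1 stepND xc ble_trans by (cases "D x") auto
    moreover have "ble (f x) v"
      using m2 stepD xc ble_trans by (cases "D x") auto
    ultimately show ?thesis unfolding bruhat_interval_def by simp
  qed
  have sub: "f ` ?I \<subseteq> ?I" using maps by auto
  have inj: "inj_on f ?I"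
    by (rule inj_onI) (metis Ic f_inv)
  have img: "f ` ?I = ?I"
  proof
    show "f ` ?I \<subseteq> ?I" by (rule sub)
    show "?I \<subseteq> f ` ?I"
    proof
      fix x assume "x \<in> ?I"
      then have "x = f (f x)" "f x \<in> ?I" using f_inv Ic maps by auto
      then show "x \<in> f ` ?I" by blast
    qed
  qed
  have bij: "bij_betw f ?I ?I" using inj img unfolding bij_betw_def by simp
  have edges: "gamma_edge G S u v (f x) (f y) \<longleftrightarrow> gamma_edge G S u v x y" if "x \<in> ?I" "y \<in> ?I" for x y
  proof -
    have "f x \<noteq> f y \<longleftrightarrow> x \<noteq> y" using inj that inj_on_eq_iff by metis
    then show ?thesis unfolding gamma_edge_def using that maps edge Ic by auto
  qed
  show ?thesis using sub bij edges unfolding gamma_automorphism_def by auto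
qed

end



context coxsys begin

lemma SSR: "s \<in> S \<Longrightarrow> g \<in> carrier G \<Longrightarrow> g \<otimes> s \<otimes> s = g"
  using S_sq S_car by (simp add: m_assoc)

lemma len_R_par: "s \<in> S \<Longrightarrow> g \<in> carrier G \<Longrightarrow> len (g \<otimes> s) \<noteq> len g"
proof -
  assume s: "s \<in> S" and g: "g \<in> carrier G"
  have sc: "s \<in> carrier G" using s S_car by auto
  have e: "s \<otimes> inv g = inv (g \<otimes> s)" using g sc S_inv[OF s] by (simp add: inv_mult_group)
  have "len (s \<otimes> inv g) \<noteq> len (inv g)" using len_S_par s g by simp
  then show ?thesis using e len_inv g sc by simp
qed

lemma left_case:
  assumes uv: "ble u v" and s: "s \<in> S" and dv: "len (s \<otimes> v) < len v" and du: "\<not> len (s \<otimes> u) < len u"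
  shows "(\<lambda>x. s \<otimes> x) ` bruhat_interval G S u v \<subseteq> bruhat_interval G S u v \<and>
            gamma_automorphism G S u v (\<lambda>x. s \<otimes> x)"
proof (rule final[where D = "\<lambda>x. len (s \<otimes> x) < len x"])
  have sc: "s \<in> carrier G" using s S_car by auto
  have sr: "s \<in> refl" using S_refl s by simp
  show "\<forall>x\<in>carrier G. s \<otimes> x \<in> carrier G" using sc by simp
  show "\<forall>x\<in>carrier G. s \<otimes> (s \<otimes> x) = x" using SS s by simp
  show "\<forall>x y. ble x y \<longrightarrow>
      ble (if len (s \<otimes> x) < len x then s \<otimes> x else x) (if len (s \<otimes> y) < len y then s \<otimes> y else y) \<and>
      ble (if len (s \<otimes> x) < len x then x else s \<otimes> x) (if len (s \<otimes> y) < len y then y else s \<otimes> y)"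
    using chain[OF s] unfolding lo_def hi_def by blast
  show "\<forall>x\<in>carrier G. len (s \<otimes> x) < len x \<longrightarrow> ble (s \<otimes> x) x"
    using ble_step[OF step_left[OF sr]] SS[OF s] sc by (metis m_closed)
  show "\<forall>x\<in>carrier G. \<not> len (s \<otimes> x) < len x \<longrightarrow> ble x (s \<otimes> x)"
    using ble_step[OF step_left[OF sr]] len_S_gt[OF s] by blast
  show "\<forall>x\<in>carrier G. \<forall>y\<in>carrier G. (\<exists>t\<in>refl. s \<otimes> y = s \<otimes> x \<otimes> t) \<longleftrightarrow> (\<exists>t\<in>refl. y = x \<otimes> t)"
    using sc refl_car by (auto simp: m_assoc)
  show "ble u v" by (rule uv)
  show "len (s \<otimes> v) < len v" by (rule dv)
  show "\<not> len (s \<otimes> u) < len u" by (rule du)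
qed

lemma right_case:
  assumes uv: "ble u v" and s: "s \<in> S" and dv: "len (v \<otimes> s) < len v" and du: "\<not> len (u \<otimes> s) < len u"
  shows "(\<lambda>x. x \<otimes> s) ` bruhat_interval G S u v \<subseteq> bruhat_interval G S u v \<and>
            gamma_automorphism G S u v (\<lambda>x. x \<otimes> s)"
proof (rule final[where D = "\<lambda>x. len (x \<otimes> s) < len x"])
  have sc: "s \<in> carrier G" using s S_car by auto
  have sr: "s \<in> refl" using S_refl s by simp
  show "\<forall>x\<in>carrier G. x \<otimes> s \<in> carrier G" using sc by simp
  show "\<forall>x\<in>carrier G. x \<otimes> s \<otimes> s = x" using SSR s by simp
  show "\<forall>x y. ble x y \<longrightarrow>
      ble (if len (x \<otimes> s) < len x then x \<otimes> s else x) (if len (y \<otimes> s) < len y then y \<otimes> s else y) \<and>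
      ble (if len (x \<otimes> s) < len x then x else x \<otimes> s) (if len (y \<otimes> s) < len y then y else y \<otimes> s)"
    using chainR[OF s] unfolding loR_def hiR_def by blast
  show "\<forall>x\<in>carrier G. len (x \<otimes> s) < len x \<longrightarrow> ble (x \<otimes> s) x"
  proof (intro ballI impI)
    fix x assume x: "x \<in> carrier G" and d: "len (x \<otimes> s) < len x"
    have "step (x \<otimes> s) (x \<otimes> s \<otimes> s)" by (rule step_right[OF sr]) (use x sc d SSR[OF s x] in auto)
    then show "ble (x \<otimes> s) x" using ble_step SSR[OF s x] by simp
  qed
  show "\<forall>x\<in>carrier G. \<not> len (x \<otimes> s) < len x \<longrightarrow> ble x (x \<otimes> s)"
  proof (intro ballI impI)
    fix x assume x: "x \<in> carrier G" and d: "\<not> len (x \<otimes> s) < len x"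
    have "len x < len (x \<otimes> s)" using d len_R_par[OF s x] by simp
    then show "ble x (x \<otimes> s)" using ble_step step_right[OF sr x] by simp
  qed
  show "\<forall>x\<in>carrier G. \<forall>y\<in>carrier G. (\<exists>t\<in>refl. y \<otimes> s = x \<otimes> s \<otimes> t) \<longleftrightarrow> (\<exists>t\<in>refl. y = x \<otimes> t)"
  proof (intro ballI iffI)
    fix x y assume x: "x \<in> carrier G" and y: "y \<in> carrier G"
    {
      assume "\<exists>t\<in>refl. y \<otimes> s = x \<otimes> s \<otimes> t"
      then obtain t where t: "t \<in> refl" "y \<otimes> s = x \<otimes> s \<otimes> t" by blast
      have tc: "t \<in> carrier G" using t refl_car by auto
      have t': "s \<otimes> t \<otimes> inv s \<in> refl" using refl_conj t sc by simp
      have "y = y \<otimes> s \<otimes> s" using SSR[OF s y] by simp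
      also have "\<dots> = x \<otimes> (s \<otimes> t \<otimes> inv s)" using t(2) S_inv[OF s] x sc tc by (simp add: m_assoc)
      finally show "\<exists>t\<in>refl. y = x \<otimes> t" using t' by blast
    }
    {
      assume "\<exists>t\<in>refl. y = x \<otimes> t"
      then obtain t where t: "t \<in> refl" "y = x \<otimes> t" by blast
      have tc: "t \<in> carrier G" using t refl_car by auto
      have t': "s \<otimes> t \<otimes> inv s \<in> refl" using refl_conj t sc by simp
      have "y \<otimes> s = x \<otimes> s \<otimes> s \<otimes> t \<otimes> s" using t(2) SSR[OF s x] by simp
      also have "\<dots> = x \<otimes> s \<otimes> (s \<otimes> t \<otimes> inv s)" using S_inv[OF s] x sc tc by (simp add: m_assoc)
      finally show "\<exists>t\<in>refl. y \<otimes> s = x \<otimes> s \<otimes> t" using t' by blast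
    }
  qed
  show "ble u v" by (rule uv)
  show "len (v \<otimes> s) < len v" by (rule dv)
  show "\<not> len (u \<otimes> s) < len u" by (rule du)
qed

end

theorem proposition3p2:
  assumes "coxeter_system G S"
    and "u \<in> carrier G" and "v \<in> carrier G"
    and "bruhat_le G S u v"
  shows "(s \<in> left_descents G S v - left_descents G S u \<longrightarrow>
            (\<lambda>x. s \<otimes>\<^bsub>G\<^esub> x) ` bruhat_interval G S u v \<subseteq> bruhat_interval G S u v \<and>
            gamma_automorphism G S u v (\<lambda>x. s \<otimes>\<^bsub>G\<^esub> x)) \<and>
         (s \<in> right_descents G S v - right_descents G S u \<longrightarrow>
            (\<lambda>x. x \<otimes>\<^bsub>G\<^esub> s) ` bruhat_interval G S u v \<subseteq> bruhat_interval G S u v \<and>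
            gamma_automorphism G S u v (\<lambda>x. x \<otimes>\<^bsub>G\<^esub> s))"
proof -
  obtain m where grp: "group G" and S_sub: "S \<subseteq> carrier G"
    and gen: "\<forall>g\<in>carrier G. \<exists>ws. set ws \<subseteq> S \<and> word_prod G ws = g"
    and cm: "coxeter_matrix S m"
    and rels: "\<forall>s\<in>S. \<forall>t\<in>S. m s t > 0 \<longrightarrow> (s \<otimes>\<^bsub>G\<^esub> t) [^]\<^bsub>G\<^esub> (m s t) = \<one>\<^bsub>G\<^esub>"
    and pres: "\<forall>ws. set ws \<subseteq> S \<longrightarrow> word_prod G ws = \<one>\<^bsub>G\<^esub> \<longrightarrow> cox_equiv S m ws []"
    using assms(1) unfolding coxeter_system_def by blast
  interpret coxsys G S m
    by (rule coxsys.intro[OF grp]) (unfold_locales, use S_sub gen cm rels pres in auto)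
  show ?thesis
  proof (rule conjI; rule impI)
    assume "s \<in> left_descents G S v - left_descents G S u"
    then have "s \<in> S" "len (s \<otimes>\<^bsub>G\<^esub> v) < len v" "\<not> len (s \<otimes>\<^bsub>G\<^esub> u) < len u"
      unfolding left_descents_def by auto
    then show "(\<lambda>x. s \<otimes>\<^bsub>G\<^esub> x) ` bruhat_interval G S u v \<subseteq> bruhat_interval G S u v \<and>
            gamma_automorphism G S u v (\<lambda>x. s \<otimes>\<^bsub>G\<^esub> x)"
      using left_case assms(4) by blast
  next
    assume "s \<in> right_descents G S v - right_descents G S u"
    then have "s \<in> S" "len (v \<otimes>\<^bsub>G\<^esub> s) < len v" "\<not> len (u \<otimes>\<^bsub>G\<^esub> s) < len u"
      unfolding right_descents_def by auto
    then show "(\<lambda>x. x \<otimes>\<^bsub>G\<^esub> s) ` bruhat_interval G S u v \<subseteq> bruhat_interval G S u v \<and>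
            gamma_automorphism G S u v (\<lambda>x. x \<otimes>\<^bsub>G\<^esub> s)"
      using right_case assms(4) by blast
  qed
qed


end
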